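(* Let $n=2p_1^{J_1}\cdots p_s^{J_s}$, where $s\ge2$, the $p_i$ are distinct odd primes, $J_i\ge1$, and $\prod_{i=1}^r p_i^{J_i}<p_{r+1}$ for every $r\in\{1,\dots,s-1\}$. Let $\mathcal{D}_1,\mathcal{D}_2$ be sets of positive divisors of $n$ such that (1) $\sum_{d\in\mathcal{D}_1,\,d\text{ odd}}\phi(n/d)=\sum_{d\in\mathcal{D}_2,\,d\text{ odd}}\phi(n/d)$, and (2) $\sum_{d\in\mathcal{D}_1,\,d\text{ even}}\phi(n/d)=\sum_{d\in\mathcal{D}_2,\,d\text{ even}}\phi(n/d)$. Then $\mathcal{D}_1=\mathcal{D}_2$.
   Context: $\phi$ is Euler's totient function. *)

theory Defs
  imports "HOL-Number_Theory.Number_Theory"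
begin

end

theory Submission
  imports Defs
begin


lemma superinc:
  fixes w x y :: "nat \<Rightarrow> nat" and c :: nat
  assumes "\<forall>k\<le>J. c * (\<Sum>j<k. w j) < w k" "\<forall>j\<le>J. x j \<le> c" "\<forall>j\<le>J. y j \<le> c"
    "(\<Sum>j\<le>J. w j * x j) = (\<Sum>j\<le>J. w j * y j)"
  shows "\<forall>j\<le>J. x j = y j"
  using assms
proof (induction J)
  case 0
  then show ?case by auto
next
  case (Suc J)
  have bx: "(\<Sum>j\<le>J. w j * x j) \<le> (\<Sum>j\<le>J. w j * c)"
    using Suc.prems(2) by (intro sum_mono) auto
  have by': "(\<Sum>j\<le>J. w j * y j) \<le> (\<Sum>j\<le>J. w j * c)"
    using Suc.prems(3) by (intro sum_mono) auto
  have "(\<Sum>j\<le>J. w j * c) = c * (\<Sum>j<Suc J. w j)"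
    by (simp add: sum_distrib_left lessThan_Suc_atMost mult.commute)
  also have "\<dots> < w (Suc J)" using Suc.prems(1) by auto
  finally have lt: "(\<Sum>j\<le>J. w j * c) < w (Suc J)" .
  define a where "a = (\<Sum>j\<le>J. w j * x j)"
  define b where "b = (\<Sum>j\<le>J. w j * y j)"
  have al: "a < w (Suc J)" "b < w (Suc J)" using bx by' lt a_def b_def by auto
  have eq: "a + w (Suc J) * x (Suc J) = b + w (Suc J) * y (Suc J)"
    using Suc.prems(4) by (simp add: a_def b_def)
  have "(a + w (Suc J) * x (Suc J)) div w (Suc J) = x (Suc J)" using al by simp
  moreover have "(b + w (Suc J) * y (Suc J)) div w (Suc J) = y (Suc J)" using al by simp
  ultimately have xy: "x (Suc J) = y (Suc J)" using eq by simp
  then have "a = b" using eq by simp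
  then have p4: "(\<Sum>j\<le>J. w j * x j) = (\<Sum>j\<le>J. w j * y j)" using a_def b_def by simp
  have p1: "\<forall>k\<le>J. c * (\<Sum>j<k. w j) < w k" using Suc.prems(1) by simp
  have p2: "\<forall>j\<le>J. x j \<le> c" using Suc.prems(2) by simp
  have p3: "\<forall>j\<le>J. y j \<le> c" using Suc.prems(3) by simp
  have "\<forall>j\<le>J. x j = y j" using Suc.IH[OF p1 p2 p3 p4] .
  then show ?case using xy le_Suc_eq by auto
qed


lemma powsum:
  assumes "prime (p::nat)"
  shows "(\<Sum>j<Suc k. totient (p^j)) = p^k"
proof (induction k)
  case 0
  then show ?case by simp
next
  case (Suc k)
  have "p \<ge> 1" using assms prime_ge_1_nat by blast
  have "(\<Sum>j<Suc (Suc k). totient (p^j)) = p^k + p^k * (p - 1)"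
    using Suc totient_prime_power_Suc[OF assms, of k] by simp
  also have "\<dots> = p^k * (1 + (p - 1))" by (simp add: algebra_simps)
  also have "\<dots> = p^Suc k" using \<open>p \<ge> 1\<close> by simp
  finally show ?case .
qed

lemma powcond:
  assumes "prime (p::nat)" "c < p - 1"
  shows "c * (\<Sum>j<k. totient (p^j)) < totient (p^k)"
proof (cases k)
  case 0
  then show ?thesis by simp
next
  case (Suc k')
  have "c * (\<Sum>j<k. totient (p^j)) = c * p^k'" using powsum[OF assms(1)] Suc by simp
  also have "\<dots> < p^k' * (p - 1)"
    using assms prime_gt_0_nat by (simp add: mult.commute)
  finally show ?thesis using Suc totient_prime_power_Suc[OF assms(1)] by simp
qed



lemma dvd_decomp_pow:
  assumes "prime (p::nat)" "d dvd Q * p^J"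
  shows "\<exists>e j. e dvd Q \<and> j \<le> J \<and> d = e * p^j"
proof -
  obtain e c where "d = e * c" "e dvd Q" "c dvd p^J" using division_decomp[OF assms(2)] by blast
  moreover obtain j where "j \<le> J" "c = p^j" using \<open>c dvd p^J\<close> divides_primepow_nat[OF assms(1)] by blast
  ultimately show ?thesis by blast
qed

lemma pow_inj:
  assumes "prime (p::nat)" "\<not> p dvd e1" "\<not> p dvd e2" "e1 * p^j1 = e2 * p^j2"
  shows "j1 = j2 \<and> e1 = e2"
proof -
  have pp: "p > 0" using assms(1) prime_gt_0_nat by blast
  have key: "\<not> i1 < i2"
    if "\<not> p dvd f1" "f1 * p^i1 = f2 * p^i2" for i1 i2 f1 f2
  proof
    assume lt: "i1 < i2"
    have "p^i2 = p^i1 * p^(i2-i1)" using lt by (metis le_add_diff_inverse less_imp_le power_add)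
    then have "f1 * p^i1 = (f2 * p^(i2-i1)) * p^i1" using that(2) by (simp add: ac_simps)
    then have "f1 = f2 * p^(i2-i1)" using pp by (metis mult_right_cancel power_not_zero not_gr0)
    moreover have "p dvd p^(i2-i1)" using lt by simp
    ultimately show False using that(1) by (metis dvd_mult)
  qed
  then have "j1 = j2" using key[OF assms(2,4)] key[OF assms(3) assms(4)[symmetric]] by simp
  then show ?thesis using assms(4) pp by simp
qed

lemma decomp:
  assumes p: "prime (p::nat)" and np: "\<not> p dvd Q" and Q: "Q > 0"
    and A: "A \<subseteq> {d. d dvd Q * p^J}"
  shows "(\<Sum>d\<in>A. totient d) = (\<Sum>j\<le>J. totient (p^j) * (\<Sum>e\<in>{e. e dvd Q \<and> e * p^j \<in> A}. totient e))"
proof -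
  define A' where "A' = (\<lambda>j. {e. e dvd Q \<and> e * p^j \<in> A})"
  have finA': "finite (A' j)" for j
    by (rule finite_subset[of _ "{e. e dvd Q}"]) (use Q in \<open>auto simp: A'_def\<close>)
  have ndvd: "\<not> p dvd e" if "e dvd Q" for e using that np dvd_trans by blast
  have "(\<Sum>j\<le>J. totient (p^j) * (\<Sum>e\<in>A' j. totient e)) = (\<Sum>j\<le>J. \<Sum>e\<in>A' j. totient (e * p^j))"
  proof (rule sum.cong[OF refl])
    fix j assume "j \<in> {..J}"
    have "totient (p^j) * (\<Sum>e\<in>A' j. totient e) = (\<Sum>e\<in>A' j. totient e * totient (p^j))"
      by (simp add: sum_distrib_right mult.commute)
    also have "\<dots> = (\<Sum>e\<in>A' j. totient (e * p^j))"
    proof (rule sum.cong[OF refl])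
      fix e assume "e \<in> A' j"
      then have "\<not> p dvd e" using ndvd A'_def by auto
      then have "coprime e p" using p by (metis coprime_commute prime_imp_coprime)
      then have "coprime e (p^j)" by simp
      then show "totient e * totient (p^j) = totient (e * p^j)" by (simp add: totient_mult_coprime)
    qed
    finally show "totient (p^j) * (\<Sum>e\<in>A' j. totient e) = (\<Sum>e\<in>A' j. totient (e * p^j))" .
  qed
  also have "\<dots> = (\<Sum>x\<in>Sigma {..J} A'. totient (snd x * p ^ fst x))"
    using finA' by (subst sum.Sigma) (auto simp: case_prod_beta)
  also have "\<dots> = (\<Sum>d\<in>A. totient d)"
  proof (rule sum.reindex_bij_betw)
    show "bij_betw (\<lambda>x. snd x * p ^ fst x) (Sigma {..J} A') A"
    proof (rule bij_betwI')
      fix x y assume "x \<in> Sigma {..J} A'" "y \<in> Sigma {..J} A'"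
      then have "\<not> p dvd snd x" "\<not> p dvd snd y" using ndvd A'_def by auto
      then show "(snd x * p ^ fst x = snd y * p ^ fst y) = (x = y)"
        using pow_inj[OF p] by (metis prod.expand)
    next
      fix x assume "x \<in> Sigma {..J} A'"
      then show "snd x * p ^ fst x \<in> A" using A'_def by auto
    next
      fix d assume "d \<in> A"
      then have "d dvd Q * p^J" using A by auto
      then obtain e j where "e dvd Q" "j \<le> J" "d = e * p^j" using dvd_decomp_pow[OF p] by blast
      then show "\<exists>x\<in>Sigma {..J} A'. d = snd x * p ^ fst x"
        using \<open>d \<in> A\<close> by (intro bexI[of _ "(j,e)"]) (auto simp: A'_def)
    qed
  qed
  finally show ?thesis by (simp add: A'_def)
qed


lemma divdiv: "d dvd (m::nat) \<Longrightarrow> m > 0 \<Longrightarrow> m div (m div d) = d"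
  by (metis dvd_div_mult_self dvd_mult_div_cancel dvd_triv_right nonzero_mult_div_cancel_right neq0_conv mult_is_0 div_mult_self1_is_m)
lemma divdvd: "d dvd (m::nat) \<Longrightarrow> m div d dvd m"
  by (metis dvd_div_mult_self dvd_triv_left)
lemma odd_part: "odd (d::nat) \<Longrightarrow> d dvd 2*m \<Longrightarrow> d dvd m"
  by (metis coprime_dvd_mult_right_iff coprime_commute coprime_right_2_iff_odd)
lemma even_part: "(d::nat) dvd 2*m \<Longrightarrow> even d \<Longrightarrow> (2*m) div d dvd m"
proof -
  assume a: "d dvd 2*m" "even d"
  then obtain d' where d': "d = 2*d'" by blast
  then have "d' dvd m" using a by simp
  then obtain k where k: "m = d' * k" by blast
  show ?thesis
  proof (cases "d' = 0")
    case True then show ?thesis using k by simp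
  next
    case False
    then have "(2*m) div d = k" using d' k by simp
    then show ?thesis using k by simp
  qed
qed
lemma odd_dvd: "(x::nat) dvd m \<Longrightarrow> odd m \<Longrightarrow> odd x" by (metis dvd_trans)
lemma div2: "(k::nat) dvd m \<Longrightarrow> (2*m) div k = 2 * (m div k)"
  by (metis div_mult_swap mult.commute)


definition sumdist :: "nat \<Rightarrow> bool" where
  "sumdist Q \<longleftrightarrow> (\<forall>A B. A \<subseteq> {d. d dvd Q} \<longrightarrow> B \<subseteq> {d. d dvd Q} \<longrightarrow>
      (\<Sum>d\<in>A. totient d) = (\<Sum>d\<in>B. totient d) \<longrightarrow> A = B)"

lemma sumdist_1: "sumdist 1"
  unfolding sumdist_def
proof (intro allI impI)
  fix A B :: "nat set"
  assume "A \<subseteq> {d. d dvd 1}" "B \<subseteq> {d. d dvd 1}" "(\<Sum>d\<in>A. totient d) = (\<Sum>d\<in>B. totient d)"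
  then have "A = {} \<or> A = {1}" "B = {} \<or> B = {1}" "(\<Sum>d\<in>A. totient d) = (\<Sum>d\<in>B. totient d)"
    by (auto simp: subset_singleton_iff)
  then show "A = B" by auto
qed

lemma sumdist_step:
  assumes p: "prime (p::nat)" and np: "\<not> p dvd Q" and Q: "Q > 0" and Qp: "Q < p - 1"
    and sd: "sumdist Q"
  shows "sumdist (Q * p^J)"
  unfolding sumdist_def
proof (intro allI impI)
  fix A B :: "nat set"
  assume A: "A \<subseteq> {d. d dvd Q * p^J}" and B: "B \<subseteq> {d. d dvd Q * p^J}"
    and eq: "(\<Sum>d\<in>A. totient d) = (\<Sum>d\<in>B. totient d)"
  define A' where "A' = (\<lambda>j. {e. e dvd Q \<and> e * p^j \<in> A})"
  define B' where "B' = (\<lambda>j. {e. e dvd Q \<and> e * p^j \<in> B})"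
  have bnd: "(\<Sum>e\<in>X. totient e) \<le> Q" if "X \<subseteq> {e. e dvd Q}" for X
  proof -
    have "(\<Sum>e\<in>X. totient e) \<le> (\<Sum>e\<in>{e. e dvd Q}. totient e)"
      using that Q by (intro sum_mono2) auto
    also have "\<dots> = Q" by (rule totient_divisor_sum)
    finally show ?thesis .
  qed
  have E: "(\<Sum>j\<le>J. totient (p^j) * (\<Sum>e\<in>A' j. totient e)) = (\<Sum>j\<le>J. totient (p^j) * (\<Sum>e\<in>B' j. totient e))"
    using decomp[OF p np Q A] decomp[OF p np Q B] eq unfolding A'_def B'_def by simp
  have bA: "(\<Sum>e\<in>A' j. totient e) \<le> Q" for j by (rule bnd) (auto simp: A'_def)
  have bB: "(\<Sum>e\<in>B' j. totient e) \<le> Q" for j by (rule bnd) (auto simp: B'_def)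
  have "\<forall>j\<le>J. (\<Sum>e\<in>A' j. totient e) = (\<Sum>e\<in>B' j. totient e)"
  proof (rule superinc[where c=Q and w="\<lambda>j. totient (p^j)" and x="\<lambda>j. \<Sum>e\<in>A' j. totient e" and y="\<lambda>j. \<Sum>e\<in>B' j. totient e"])
    show "\<forall>k\<le>J. Q * (\<Sum>j<k. totient (p^j)) < totient (p^k)" using powcond[OF p Qp] by blast
    show "\<forall>j\<le>J. (\<Sum>e\<in>A' j. totient e) \<le> Q" using bA by blast
    show "\<forall>j\<le>J. (\<Sum>e\<in>B' j. totient e) \<le> Q" using bB by blast
    show "(\<Sum>j\<le>J. totient (p^j) * (\<Sum>e\<in>A' j. totient e)) = (\<Sum>j\<le>J. totient (p^j) * (\<Sum>e\<in>B' j. totient e))" by (rule E)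
  qed
  then have AB': "A' j = B' j" if "j \<le> J" for j
  proof -
    have "A' j \<subseteq> {d. d dvd Q}" "B' j \<subseteq> {d. d dvd Q}" by (auto simp: A'_def B'_def)
    moreover have "(\<Sum>e\<in>A' j. totient e) = (\<Sum>e\<in>B' j. totient e)" using that \<open>\<forall>j\<le>J. _\<close> by blast
    ultimately show ?thesis using sd[unfolded sumdist_def, rule_format] by blast
  qed
  show "A = B"
  proof (intro equalityI subsetI)
    fix d assume "d \<in> A"
    then obtain e j where "e dvd Q" "j \<le> J" "d = e * p^j" using dvd_decomp_pow[OF p] A by blast
    then show "d \<in> B" using AB'[of j] \<open>d \<in> A\<close> unfolding A'_def B'_def by auto
  next
    fix d assume "d \<in> B"
    then obtain e j where "e dvd Q" "j \<le> J" "d = e * p^j" using dvd_decomp_pow[OF p] B by blast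
    then show "d \<in> A" using AB'[of j] \<open>d \<in> B\<close> unfolding A'_def B'_def by auto
  qed
qed



theorem lemma3p5:
  fixes s :: nat and p J :: "nat \<Rightarrow> nat" and n :: nat and D1 D2 :: "nat set"
  assumes s2: "s \<ge> 2"
    and primes: "\<forall>i\<in>{1..s}. prime (p i) \<and> odd (p i)"
    and distinct: "inj_on p {1..s}"
    and Jpos: "\<forall>i\<in>{1..s}. J i \<ge> 1"
    and growth: "\<forall>r\<in>{1..s-1}. (\<Prod>i=1..r. p i ^ J i) < p (r + 1)"
    and n_def: "n = 2 * (\<Prod>i=1..s. p i ^ J i)"
    and D1: "D1 \<subseteq> {d. d > 0 \<and> d dvd n}"
    and D2: "D2 \<subseteq> {d. d > 0 \<and> d dvd n}"
    and odd_eq: "(\<Sum>d\<in>{d\<in>D1. odd d}. totient (n div d)) = (\<Sum>d\<in>{d\<in>D2. odd d}. totient (n div d))"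
    and even_eq: "(\<Sum>d\<in>{d\<in>D1. even d}. totient (n div d)) = (\<Sum>d\<in>{d\<in>D2. even d}. totient (n div d))"
  shows "D1 = D2"
proof -
  define P where "P = (\<lambda>r. \<Prod>i=1..r. p i ^ J i)"
  have Ppos: "P r > 0" if "r \<le> s" for r
    unfolding P_def using primes that prime_gt_0_nat by (intro prod_pos) auto
  have Pndvd: "\<not> q dvd P r" if qh: "prime q" "\<forall>i\<in>{1..r}. p i \<noteq> q" "r \<le> s" for q r
  proof
    assume "q dvd P r"
    then obtain i where i: "i \<in> {1..r}" "q dvd p i ^ J i"
      unfolding P_def by (subst (asm) prime_dvd_prod_iff[OF finite_atLeastAtMost qh(1)]) blast
    then have "q dvd p i" using qh(1) prime_dvd_power by blast
    then have "q = p i" using primes i qh(1,3) primes_dvd_imp_eq by (metis atLeastAtMost_iff le_trans)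
    then show False using qh(2) i by auto
  qed
  have Podd: "odd (P r)" if "r \<le> s" for r
  proof -
    have "\<forall>i\<in>{1..r}. p i \<noteq> 2" proof
      fix i assume "i \<in> {1..r}"
      then have "odd (p i)" using primes that by auto
      then show "p i \<noteq> 2" by auto
    qed
    then show ?thesis using Pndvd[of 2 r] that two_is_prime_nat by blast
  qed
  have sd: "r \<le> s \<Longrightarrow> sumdist (P r)" for r
  proof (induction r)
    case 0
    then show ?case using sumdist_1 by (simp add: P_def)
  next
    case (Suc r)
    have sr: "Suc r \<in> {1..s}" using Suc.prems by simp
    have pr: "prime (p (Suc r))" "odd (p (Suc r))" using primes sr by blast+
    have rs: "r \<le> s" using Suc.prems by simp
    have PS: "P (Suc r) = P r * p (Suc r) ^ J (Suc r)" by (simp add: P_def prod.cl_ivl_Suc)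
    have nd: "\<not> p (Suc r) dvd P r"
    proof (rule Pndvd)
      show "\<forall>i\<in>{1..r}. p i \<noteq> p (Suc r)"
      proof
        fix i assume i: "i \<in> {1..r}"
        then have "i \<in> {1..s}" "i \<noteq> Suc r" using rs by auto
        then show "p i \<noteq> p (Suc r)" using inj_onD[OF distinct _ _ sr] by blast
      qed
    qed (use pr rs in auto)
    have lt: "P r < p (Suc r) - 1"
    proof (cases "r = 0")
      case True
      have "p (Suc r) \<noteq> 2" using pr by auto
      then have "p (Suc r) \<ge> 3" using prime_ge_2_nat[OF pr(1)] by linarith
      then show ?thesis using True by (simp add: P_def)
    next
      case False
      then have "r \<in> {1..s-1}" using Suc.prems by simp
      then have "P r < p (Suc r)" using growth unfolding P_def by simp
      moreover have "odd (P r)" using Podd rs by blast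
      ultimately show ?thesis using pr(2) by (auto elim!: oddE)
    qed
    show ?case unfolding PS
      by (rule sumdist_step[OF pr(1) nd Ppos[OF rs] lt Suc.IH[OF rs]])
  qed
  define m where "m = P s"
  have m: "m > 0" "odd m" "sumdist m" "n = 2 * m"
    using Ppos[of s] Podd[of s] sd[of s] n_def unfolding m_def P_def by simp_all
  define Od where "Od = (\<lambda>D. {e. e dvd m \<and> m div e \<in> D})"
  define Ev where "Ev = (\<lambda>D. {e. e dvd m \<and> n div e \<in> D})"
  have n0: "n > 0" using m by simp
  have nm: "n = 2 * m" using m by simp
  have dd: "m div (m div d) = d" "m div d dvd m" if "d dvd m" for d
    using divdiv[OF that m(1)] divdvd[OF that] by simp_all
  have ddn: "n div (n div d) = d" if "d dvd n" for d
    using divdiv[OF that n0] by simp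
  have odd_m: "d dvd m" if "d dvd n" "odd d" for d
    using odd_part[of d m] that nm by simp
  have even_m: "n div d dvd m" if "d dvd n" "even d" for d
    using even_part[of d m] that nm by simp
  have nd2: "n div e = 2 * (m div e)" if "e dvd m" for e
    using div2[OF that] nm by simp
  have sumO: "(\<Sum>d\<in>{d\<in>D. odd d}. totient (n div d)) = (\<Sum>e\<in>Od D. totient e)"
    if D: "D \<subseteq> {d. d > 0 \<and> d dvd n}" for D
  proof -
    have "(\<Sum>e\<in>Od D. totient (n div (m div e))) = (\<Sum>d\<in>{d\<in>D. odd d}. totient (n div d))"
    proof (rule sum.reindex_bij_betw, rule bij_betw_byWitness[where f'="\<lambda>d. m div d"])
      show "\<forall>a\<in>Od D. m div (m div a) = a"
      proof
        fix a assume "a \<in> Od D" then have "a dvd m" unfolding Od_def by blast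
        then show "m div (m div a) = a" by (rule dd)
      qed
      show "\<forall>a\<in>{d\<in>D. odd d}. m div (m div a) = a"
      proof
        fix a assume "a \<in> {d\<in>D. odd d}" then have "a dvd n" "odd a" using D by auto
        then show "m div (m div a) = a" using dd odd_m by blast
      qed
      show "(\<lambda>e. m div e) ` Od D \<subseteq> {d\<in>D. odd d}"
      proof
        fix x assume "x \<in> (\<lambda>e. m div e) ` Od D"
        then obtain e where e: "e \<in> Od D" "x = m div e" by blast
        then have "e dvd m" "m div e \<in> D" unfolding Od_def by blast+
        then have "x dvd m" "x \<in> D" using dd e by auto
        then show "x \<in> {d\<in>D. odd d}" using odd_dvd m(2) by blast
      qed
      show "(\<lambda>e. m div e) ` {d\<in>D. odd d} \<subseteq> Od D"
      proof
        fix x assume "x \<in> (\<lambda>e. m div e) ` {d\<in>D. odd d}"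
        then obtain d where e: "d \<in> D" "odd d" "x = m div d" by blast
        then have dm: "d dvd m" using odd_m D by blast
        then show "x \<in> Od D" unfolding Od_def using dd[OF dm] e by simp
      qed
    qed
    moreover have "totient (n div (m div e)) = totient e" if "e \<in> Od D" for e
    proof -
      have em: "e dvd m" using that Od_def by auto
      have "n div (m div e) = 2 * e" using nd2[OF dd(2)[OF em]] dd(1)[OF em] by simp
      moreover have "odd e" using em m odd_dvd by blast
      ultimately show ?thesis by (simp add: totient_double)
    qed
    ultimately show ?thesis by simp
  qed
  have sumE: "(\<Sum>d\<in>{d\<in>D. even d}. totient (n div d)) = (\<Sum>e\<in>Ev D. totient e)"
    if D: "D \<subseteq> {d. d > 0 \<and> d dvd n}" for D
  proof -
    have en: "e dvd n" if "e dvd m" for e using that nm by simp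
    have "(\<Sum>e\<in>Ev D. totient (n div (n div e))) = (\<Sum>d\<in>{d\<in>D. even d}. totient (n div d))"
    proof (rule sum.reindex_bij_betw, rule bij_betw_byWitness[where f'="\<lambda>d. n div d"])
      show "\<forall>a\<in>Ev D. n div (n div a) = a"
      proof
        fix a assume "a \<in> Ev D" then have "a dvd m" unfolding Ev_def by blast
        then show "n div (n div a) = a" using ddn en by blast
      qed
      show "\<forall>a\<in>{d\<in>D. even d}. n div (n div a) = a"
      proof
        fix a assume "a \<in> {d\<in>D. even d}" then have "a dvd n" using D by auto
        then show "n div (n div a) = a" by (rule ddn)
      qed
      show "(\<lambda>e. n div e) ` Ev D \<subseteq> {d\<in>D. even d}"
      proof
        fix x assume "x \<in> (\<lambda>e. n div e) ` Ev D"
        then obtain e where e: "e \<in> Ev D" "x = n div e" by blast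
        then have "e dvd m" "n div e \<in> D" unfolding Ev_def by blast+
        then show "x \<in> {d\<in>D. even d}" using nd2 e by auto
      qed
      show "(\<lambda>e. n div e) ` {d\<in>D. even d} \<subseteq> Ev D"
      proof
        fix x assume "x \<in> (\<lambda>e. n div e) ` {d\<in>D. even d}"
        then obtain d where e: "d \<in> D" "even d" "x = n div d" by blast
        then have dn: "d dvd n" using D by blast
        then have "x dvd m" using even_m e by blast
        moreover have "n div x = d" using ddn[OF dn] e by simp
        ultimately show "x \<in> Ev D" unfolding Ev_def using e by simp
      qed
    qed
    moreover have "n div (n div e) = e" if "e \<in> Ev D" for e
    proof -
      have "e dvd m" using that unfolding Ev_def by blast
      then show ?thesis using ddn en by blast
    qed
    ultimately show ?thesis by simp
  qed
  have OE: "Od D1 = Od D2" "Ev D1 = Ev D2"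
  proof -
    have s1: "Od D1 \<subseteq> {d. d dvd m}" "Od D2 \<subseteq> {d. d dvd m}" "Ev D1 \<subseteq> {d. d dvd m}" "Ev D2 \<subseteq> {d. d dvd m}"
      unfolding Od_def Ev_def by blast+
    have s2: "(\<Sum>e\<in>Od D1. totient e) = (\<Sum>e\<in>Od D2. totient e)"
      using sumO[OF D1] sumO[OF D2] odd_eq by simp
    have s3: "(\<Sum>e\<in>Ev D1. totient e) = (\<Sum>e\<in>Ev D2. totient e)"
      using sumE[OF D1] sumE[OF D2] even_eq by simp
    have SD: "\<And>A B. A \<subseteq> {d. d dvd m} \<Longrightarrow> B \<subseteq> {d. d dvd m} \<Longrightarrow> (\<Sum>d\<in>A. totient d) = (\<Sum>d\<in>B. totient d) \<Longrightarrow> A = B"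
      using m(3) unfolding sumdist_def by blast
    show "Od D1 = Od D2" by (rule SD[OF s1(1,2) s2])
    show "Ev D1 = Ev D2" by (rule SD[OF s1(3,4) s3])
  qed
  have sub: "X \<subseteq> Y" if X: "X \<subseteq> {d. d > 0 \<and> d dvd n}" and eqs: "Od X = Od Y" "Ev X = Ev Y" for X Y
  proof
    fix d assume d: "d \<in> X"
    then have dn: "d dvd n" using X by auto
    show "d \<in> Y"
    proof (cases "odd d")
      case True
      then have dm: "d dvd m" using odd_m dn by blast
      then have "m div d \<in> Od X" unfolding Od_def using dd[OF dm] d by simp
      then have "m div d \<in> Od Y" using eqs by simp
      then show ?thesis unfolding Od_def using dd[OF dm] by simp
    next
      case False
      then have x: "n div d dvd m" using even_m dn by blast
      then have "n div d \<in> Ev X" unfolding Ev_def using ddn[OF dn] d by simp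
      then have "n div d \<in> Ev Y" using eqs by simp
      then show ?thesis unfolding Ev_def using ddn[OF dn] by simp
    qed
  qed
  show ?thesis using sub[OF D1 OE] sub[OF D2 OE[symmetric]] by blast
qed

end
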